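(* Let $(X,T)$ be a minimal topological dynamical system with $T$ a homeomorphism. If there are $x\ne y$ in $X$ such that $(x,y)$ is proximal for $T^{-1}$ and $\inf_{n\in\mathbb{Z}_+}d(T^nx,T^ny)>0$, then $(X,T)$ is strongly $\mathcal{F}_t$-sensitive.
   Context: A topological dynamical system: compact metric space $(X,d)$ with continuous surjection $T$; minimal means every orbit is dense. $(x,y)$ is proximal for $T^{-1}$ if $\inf_{n\ge0}d(T^{-n}x,T^{-n}y)=0$. $(X,T)$ is strongly $\mathcal{F}_t$-sensitive if there is $\delta>0$ such that for each nonempty open $U$ there are $x,y\in U$ with $\{n\in\mathbb{Z}_+:d(T^nx,T^ny)>\delta\}$ thick (containing arbitrarily long blocks of consecutive integers). *)

theory Defs
  imports "HOL-Analysis.Analysis"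
begin

definition tds :: "'a::metric_space set \<Rightarrow> ('a \<Rightarrow> 'a) \<Rightarrow> bool" where
  "tds X T \<longleftrightarrow> X \<noteq> {} \<and> compact X \<and> continuous_on X T \<and> T ` X = X"

definition minimal_tds :: "'a::metric_space set \<Rightarrow> ('a \<Rightarrow> 'a) \<Rightarrow> bool" where
  "minimal_tds X T \<longleftrightarrow> tds X T \<and>
     (\<forall>x\<in>X. closure {(T ^^ n) x | n. True} \<supseteq> X)"

definition thick :: "nat set \<Rightarrow> bool" where
  "thick S \<longleftrightarrow> (\<forall>L. \<exists>m. {m..m+L} \<subseteq> S)"

definition strongly_Ft_sensitive :: "'a::metric_space set \<Rightarrow> ('a \<Rightarrow> 'a) \<Rightarrow> bool" where
  "strongly_Ft_sensitive X T \<longleftrightarrow>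
     (\<exists>\<delta>>0. \<forall>U. openin (top_of_set X) U \<and> U \<noteq> {} \<longrightarrow>
        (\<exists>x\<in>U. \<exists>y\<in>U. thick {n. dist ((T ^^ n) x) ((T ^^ n) y) > \<delta>}))"

definition proximal_for :: "('a::metric_space \<Rightarrow> 'a) \<Rightarrow> 'a \<Rightarrow> 'a \<Rightarrow> bool" where
  "proximal_for S x y \<longleftrightarrow> (INF n::nat. dist ((S ^^ n) x) ((S ^^ n) y)) = 0"

end

theory Submission
  imports Defs
begin

lemma funpow_maps:
  assumes "T ` X = X" "w \<in> X" shows "(T ^^ j) w \<in> X"
  using assms by (induction j) auto

lemma funpow_cont:
  assumes "continuous_on X T" "T ` X = X" shows "continuous_on X (T ^^ j)"
proof (induction j)
  case 0 then show ?case by (simp add: continuous_on_id)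
next
  case (Suc j)
  have "continuous_on X (T \<circ> (T ^^ j))"
    by (rule continuous_on_compose[OF Suc]) (metis assms continuous_on_subset funpow_maps image_subsetI)
  then show ?case by simp
qed

lemma inv_maps:
  assumes "T ` X = X" "inj_on T X" "w \<in> X" shows "((the_inv_into X T) ^^ m) w \<in> X"
proof (induction m)
  case 0 then show ?case using assms(3) by simp
next
  case (Suc m)
  have "the_inv_into X T (((the_inv_into X T) ^^ m) w) \<in> X"
    by (rule the_inv_into_into[OF assms(2)]) (use Suc assms(1) in auto)
  then show ?case by simp
qed

lemma inv_cancel:
  assumes "T ` X = X" "inj_on T X" "w \<in> X" shows "(T ^^ m) (((the_inv_into X T) ^^ m) w) = w"
proof (induction m)
  case 0 then show ?case by simp
next
  case (Suc m)
  have a: "((the_inv_into X T) ^^ m) w \<in> X" by (rule inv_maps[OF assms])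
  then have a': "((the_inv_into X T) ^^ m) w \<in> T ` X" using assms(1) by simp
  have "(T ^^ Suc m) (((the_inv_into X T) ^^ Suc m) w)
      = (T ^^ m) (T (the_inv_into X T (((the_inv_into X T) ^^ m) w)))"
    by (simp only: funpow_Suc_right[where f=T] funpow.simps(2)[where f="the_inv_into X T"] comp_apply)
  also have "T (the_inv_into X T (((the_inv_into X T) ^^ m) w)) = ((the_inv_into X T) ^^ m) w"
    by (rule f_the_inv_into_f[OF assms(2) a'])
  finally show ?case using Suc by simp
qed

theorem proposition5p12:
  fixes X :: "'a::metric_space set" and T :: "'a \<Rightarrow> 'a"
  assumes "minimal_tds X T"
    and "inj_on T X"
    and "continuous_on X (the_inv_into X T)"
    and "x \<in> X" and "y \<in> X" and "x \<noteq> y"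
    and "proximal_for (the_inv_into X T) x y"
    and "(INF n::nat. dist ((T ^^ n) x) ((T ^^ n) y)) > 0"
  shows "strongly_Ft_sensitive X T"
proof -
  define S where "S = the_inv_into X T"
  define d0 where "d0 = (INF n::nat. dist ((T ^^ n) x) ((T ^^ n) y))"
  have tds: "X \<noteq> {}" "compact X" "continuous_on X T" "T ` X = X"
    using assms(1) unfolding minimal_tds_def tds_def by auto
  have dense: "\<And>q. q \<in> X \<Longrightarrow> X \<subseteq> closure {(T ^^ n) q | n. True}"
    using assms(1) unfolding minimal_tds_def by auto
  have d0pos: "d0 > 0" using assms(8) d0_def by simp
  have d0le: "\<And>k. d0 \<le> dist ((T ^^ k) x) ((T ^^ k) y)"
    unfolding d0_def by (rule cINF_lower) (auto intro: bdd_belowI[of _ 0])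
  show ?thesis unfolding strongly_Ft_sensitive_def
  proof (intro exI[of _ "d0/2"] conjI allI impI)
    show "d0/2 > 0" using d0pos by simp
    fix U assume U: "openin (top_of_set X) U \<and> U \<noteq> {}"
    then obtain z where z: "z \<in> U" by blast
    have UX: "U \<subseteq> X" using U openin_subset by force
    obtain \<epsilon> where \<epsilon>0: "\<epsilon> > 0" and \<epsilon>b: "ball z \<epsilon> \<inter> X \<subseteq> U"
      using U z unfolding openin_contains_ball by blast
    have \<epsilon>: "\<epsilon> > 0" "\<And>w. w \<in> X \<Longrightarrow> dist w z < \<epsilon> \<Longrightarrow> w \<in> U"
      using \<epsilon>0 \<epsilon>b by (auto simp: dist_commute)
    have "\<forall>j. \<exists>W. open W \<and> X \<inter> (T ^^ j) -` ball z \<epsilon> = X \<inter> W"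
      using continuous_openin_preimage_gen[OF funpow_cont[OF tds(3,4)] open_ball]
      unfolding openin_open by blast
    then obtain Op where Op: "\<And>j. open (Op j)" "\<And>j. X \<inter> (T ^^ j) -` ball z \<epsilon> = X \<inter> Op j"
      by metis
    have cover: "X \<subseteq> \<Union> (range Op)"
    proof
      fix q assume q: "q \<in> X"
      then have "z \<in> closure {(T ^^ n) q | n. True}" using dense UX z by blast
      then obtain w where "w \<in> {(T ^^ n) q | n. True}" "dist w z < \<epsilon>"
        using \<epsilon>(1) unfolding closure_approachable by blast
      then obtain j where "dist ((T ^^ j) q) z < \<epsilon>" by blast
      then have "q \<in> X \<inter> Op j" using Op(2)[of j] q by (auto simp: dist_commute)
      then show "q \<in> \<Union> (range Op)" by blast
    qed
    obtain e where e: "e > 0" "\<And>w. w \<in> X \<Longrightarrow> \<exists>G \<in> range Op. ball w e \<subseteq> G"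
      using Heine_Borel_lemma[OF tds(2) cover] Op(1) by blast
    have lt: "(INF n::nat. dist ((S ^^ n) x) ((S ^^ n) y)) < e"
      using assms(7) e(1) unfolding proximal_for_def S_def by (simp only:)
    have bdd: "bdd_below ((\<lambda>n. dist ((S ^^ n) x) ((S ^^ n) y)) ` UNIV)"
      by (rule bdd_belowI[of _ 0]) auto
    have "\<exists>n\<in>UNIV. dist ((S ^^ n) x) ((S ^^ n) y) < e"
      using cINF_less_iff[OF UNIV_not_empty bdd] lt by (simp only:)
    then obtain n where n: "dist ((S ^^ n) x) ((S ^^ n) y) < e"
      by (elim bexE)
    define a where "a = (S ^^ n) x"
    define b where "b = (S ^^ n) y"
    have aX: "a \<in> X" unfolding a_def S_def
      by (rule inv_maps[OF tds(4) assms(2) assms(4)])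
    have bX: "b \<in> X" unfolding b_def S_def
      by (rule inv_maps[OF tds(4) assms(2) assms(5)])
    obtain j where j: "ball a e \<subseteq> Op j" using e(2)[OF aX] by blast
    have "a \<in> Op j" "b \<in> Op j" using j e(1) n a_def b_def by (auto simp: dist_commute)
    then have "a \<in> X \<inter> (T ^^ j) -` ball z \<epsilon>" "b \<in> X \<inter> (T ^^ j) -` ball z \<epsilon>"
      using Op(2)[of j] aX bX by auto
    then have uU: "(T ^^ j) a \<in> U" and vU: "(T ^^ j) b \<in> U"
      using \<epsilon>(2) funpow_maps[OF tds(4)] aX bX by (auto simp: dist_commute)
    have key: "\<And>w k. w \<in> X \<Longrightarrow> n \<le> k \<Longrightarrow> (T ^^ k) ((T ^^ j) ((S ^^ n) w)) = (T ^^ (k + j - n)) w"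
    proof -
      fix w k assume w: "w \<in> X" and k: "n \<le> k"
      have "(T ^^ k) ((T ^^ j) ((S ^^ n) w)) = (T ^^ (k + j - n + n)) ((S ^^ n) w)"
        using k by (simp add: funpow_add)
      also have "\<dots> = (T ^^ (k + j - n)) ((T ^^ n) ((S ^^ n) w))"
        by (simp add: funpow_add)
      also have "\<dots> = (T ^^ (k + j - n)) w" unfolding S_def
        using inv_cancel[OF tds(4) assms(2) w, of n] by (simp only:)
      finally show "(T ^^ k) ((T ^^ j) ((S ^^ n) w)) = (T ^^ (k + j - n)) w" .
    qed
    have "thick {k. dist ((T ^^ k) ((T ^^ j) a)) ((T ^^ k) ((T ^^ j) b)) > d0/2}"
      unfolding thick_def
    proof
      fix L show "\<exists>m. {m..m+L} \<subseteq> {k. dist ((T ^^ k) ((T ^^ j) a)) ((T ^^ k) ((T ^^ j) b)) > d0/2}"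
      proof (intro exI[of _ n] subsetI)
        fix k assume "k \<in> {n..n+L}"
        then have "n \<le> k" by simp
        then have "dist ((T ^^ k) ((T ^^ j) a)) ((T ^^ k) ((T ^^ j) b))
             = dist ((T ^^ (k + j - n)) x) ((T ^^ (k + j - n)) y)"
          unfolding a_def b_def using key assms(4,5) by simp
        then show "k \<in> {k. dist ((T ^^ k) ((T ^^ j) a)) ((T ^^ k) ((T ^^ j) b)) > d0/2}"
          using d0le[of "k + j - n"] d0pos by simp
      qed
    qed
    then show "\<exists>x\<in>U. \<exists>y\<in>U. thick {n. d0/2 < dist ((T ^^ n) x) ((T ^^ n) y)}"
      using uU vU by blast
  qed
qed

end
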